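(* Let $\Omega$ be a set and $Q$ an index set of partitions of $\Omega$ closed under join. For $S\in P_Q(\Omega)$ let $\mathcal{D}_S=\{f\in\mathcal{L}(\Omega):\inf_{\omega\in S}f(\omega)>0\}\cup\mathcal{L}^+(\Omega)$. Then for all $S,T\in P_Q(\Omega)$ and $x\in Q$: (1) $\mathcal{D}_S\cdot\mathcal{D}_T=\mathcal{D}_{S\cap T}$; (2) $\mathcal{D}_\emptyset=\mathcal{L}(\Omega)$ and $\mathcal{D}_\Omega=\mathcal{L}^+(\Omega)$; (3) $\epsilon_x(\mathcal{D}_S)=\mathcal{D}_{\sigma_x(S)}$.
   Context: A gamble is a bounded function $\Omega\to\mathbb{R}$; $\mathcal{L}(\Omega)$ is the set of gambles, $\mathcal{L}^+(\Omega)=\{f:f\ge0,f\ne0\}$. The infimum over the empty set is $+\infty$. A set $\mathcal{D}\subseteq\mathcal{L}(\Omega)$ is coherent if $\mathcal{L}^+(\Omega)\subseteq\mathcal{D}$, $0\notin\mathcal{D}$, and $\mathcal{D}$ is closed under addition and under multiplication by positive reals. $\Phi$ = coherent sets $\cup\{\mathcal{L}(\Omega)\}$; $\mathcal{C}(\mathcal{K})=\bigcap\{\mathcal{D}\in\Phi:\mathcal{K}\subseteq\mathcal{D}\}$. Combination: $\mathcal{D}_1\cdot\mathcal{D}_2=\mathcal{C}(\mathcal{D}_1\cup\mathcal{D}_2)$. Each $x\in Q$ corresponds to a partition $\mathcal{P}_x$ of $\Omega$ with equivalence relation $\equiv_x$; the family $\{\mathcal{P}_x\}$ is closed under join (partition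 into nonempty intersections of blocks). $\mathcal{L}_x$ is the set of gambles constant on each block of $\mathcal{P}_x$, and $\epsilon_x(\mathcal{D})=\mathcal{C}(\mathcal{D}\cap\mathcal{L}_x)$. Saturation: $\sigma_x(S)=\{\omega\in\Omega:\exists\omega'\in S,\ \omega\equiv_x\omega'\}$. $P_Q(\Omega)$ is the family of $S\subseteq\Omega$ with $\sigma_x(S)=S$ for some $x\in Q$. *)

theory Defs
  imports Main "HOL-Library.Disjoint_Sets" "HOL-Library.Extended_Real"
begin

definition gambles :: "('w \<Rightarrow> real) set" where
  "gambles = {f. \<exists>B. \<forall>w. \<bar>f w\<bar> \<le> B}"

definition pos_gambles :: "('w \<Rightarrow> real) set" where
  "pos_gambles = {f \<in> gambles. (\<forall>w. 0 \<le> f w) \<and> f \<noteq> (\<lambda>_. 0)}"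

definition coherent :: "('w \<Rightarrow> real) set \<Rightarrow> bool" where
  "coherent D \<longleftrightarrow> D \<subseteq> gambles \<and> pos_gambles \<subseteq> D \<and> (\<lambda>_. 0::real) \<notin> D
     \<and> (\<forall>f\<in>D. \<forall>g\<in>D. (\<lambda>w. f w + g w) \<in> D)
     \<and> (\<forall>f\<in>D. \<forall>c::real. c > 0 \<longrightarrow> (\<lambda>w. c * f w) \<in> D)"

definition Phi :: "('w \<Rightarrow> real) set set" where
  "Phi = {D. coherent D} \<union> {gambles}"

definition closure_C :: "('w \<Rightarrow> real) set \<Rightarrow> ('w \<Rightarrow> real) set" where
  "closure_C K = \<Inter>{D \<in> Phi. K \<subseteq> D}"

definition combine :: "('w \<Rightarrow> real) set \<Rightarrow> ('w \<Rightarrow> real) set \<Rightarrow> ('w \<Rightarrow> real) set" where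
  "combine D1 D2 = closure_C (D1 \<union> D2)"

definition equiv_x :: "('q \<Rightarrow> 'w set set) \<Rightarrow> 'q \<Rightarrow> 'w \<Rightarrow> 'w \<Rightarrow> bool" where
  "equiv_x P x w w' \<longleftrightarrow> (\<exists>B\<in>P x. w \<in> B \<and> w' \<in> B)"

definition join_part :: "'w set set \<Rightarrow> 'w set set \<Rightarrow> 'w set set" where
  "join_part A B = {a \<inter> b | a b. a \<in> A \<and> b \<in> B \<and> a \<inter> b \<noteq> {}}"

definition L_x :: "('q \<Rightarrow> 'w set set) \<Rightarrow> 'q \<Rightarrow> ('w \<Rightarrow> real) set" where
  "L_x P x = {f \<in> gambles. \<forall>B\<in>P x. \<forall>w\<in>B. \<forall>w'\<in>B. f w = f w'}"

definition eps_x :: "('q \<Rightarrow> 'w set set) \<Rightarrow> 'q \<Rightarrow> ('w \<Rightarrow> real) set \<Rightarrow> ('w \<Rightarrow> real) set" where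
  "eps_x P x D = closure_C (D \<inter> L_x P x)"

definition saturation :: "('q \<Rightarrow> 'w set set) \<Rightarrow> 'q \<Rightarrow> 'w set \<Rightarrow> 'w set" where
  "saturation P x S = {w. \<exists>w'\<in>S. equiv_x P x w w'}"

definition PQ :: "'q set \<Rightarrow> ('q \<Rightarrow> 'w set set) \<Rightarrow> 'w set set" where
  "PQ Q P = {S. \<exists>x\<in>Q. saturation P x S = S}"

text \<open>D_S: gambles whose infimum over S (as an extended real; +infinity on the empty set)
  is positive, together with the nonnegative nonzero gambles.\<close>

definition D_set :: "'w set \<Rightarrow> ('w \<Rightarrow> real) set" where
  "D_set S = {f \<in> gambles. (INF w\<in>S. ereal (f w)) > 0} \<union> pos_gambles"

end

theory Submission
  imports Defs
begin

lemma gamI: "\<forall>w. \<bar>f w\<bar> \<le> B \<Longrightarrow> f \<in> gambles"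
  unfolding gambles_def by auto

lemma gamE: "f \<in> gambles \<Longrightarrow> (\<And>B. \<forall>w. \<bar>f w\<bar> \<le> B \<Longrightarrow> thesis) \<Longrightarrow> thesis"
  unfolding gambles_def by auto

lemma gam_add: assumes "f \<in> gambles" "g \<in> gambles" shows "(\<lambda>w. f w + g w) \<in> gambles"
proof -
  obtain A where a: "\<forall>w. \<bar>f w\<bar> \<le> A" using assms(1) by (rule gamE)
  obtain B where b: "\<forall>w. \<bar>g w\<bar> \<le> B" using assms(2) by (rule gamE)
  have "\<forall>w. \<bar>f w + g w\<bar> \<le> A + B"
  proof
    fix w
    have "\<bar>f w + g w\<bar> \<le> \<bar>f w\<bar> + \<bar>g w\<bar>" by (rule abs_triangle_ineq)
    then show "\<bar>f w + g w\<bar> \<le> A + B" using a[rule_format, of w] b[rule_format, of w] by linarith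
  qed
  then show ?thesis by (rule gamI)
qed

lemma gam_scale: assumes "f \<in> gambles" shows "(\<lambda>w. c * f w) \<in> gambles"
proof -
  obtain A where a: "\<forall>w. \<bar>f w\<bar> \<le> A" using assms(1) by (rule gamE)
  have "\<forall>w. \<bar>c * f w\<bar> \<le> \<bar>c\<bar> * A"
    by (simp add: a abs_mult mult_left_mono)
  then show ?thesis by (rule gamI)
qed

lemma gam_const: "(\<lambda>w. c) \<in> gambles"
  unfolding gambles_def by auto

lemma gam_diff: "f \<in> gambles \<Longrightarrow> g \<in> gambles \<Longrightarrow> (\<lambda>w. f w - g w) \<in> gambles"
  using gam_add[of f "\<lambda>w. (-1) * g w"] gam_scale[of g "-1"] by simp

lemma gam_if: assumes "f \<in> gambles" "g \<in> gambles" shows "(\<lambda>w. if P w then f w else g w) \<in> gambles"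
proof -
  obtain A where a: "\<forall>w. \<bar>f w\<bar> \<le> A" using assms(1) by (rule gamE)
  obtain B where b: "\<forall>w. \<bar>g w\<bar> \<le> B" using assms(2) by (rule gamE)
  have "\<forall>w. \<bar>if P w then f w else g w\<bar> \<le> max A B"
  proof
    fix w
    show "\<bar>if P w then f w else g w\<bar> \<le> max A B"
    proof (cases "P w")
      case True
      have "\<bar>f w\<bar> \<le> A" using a by blast
      moreover have e: "(if P w then f w else g w) = f w" using True by simp
      ultimately show ?thesis unfolding e using max.cobounded1[of A B] by linarith
    next
      case False
      have "\<bar>g w\<bar> \<le> B" using b by blast
      moreover have e: "(if P w then f w else g w) = g w" using False by simp
      ultimately show ?thesis unfolding e using max.cobounded2[of B A] by linarith
    qed
  qed
  then show ?thesis by (rule gamI)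
qed

lemma D_char: "D_set A = {f \<in> gambles. \<exists>c>0. \<forall>w\<in>A. c \<le> f w} \<union> pos_gambles"
proof -
  have "(INF w\<in>A. ereal (f w)) > 0 \<longleftrightarrow> (\<exists>c>0. \<forall>w\<in>A. c \<le> f w)" for f
  proof
    assume "(INF w\<in>A. ereal (f w)) > 0"
    then obtain z where z: "0 < ereal z" "ereal z < (INF w\<in>A. ereal (f w))"
      using ereal_dense2 by blast
    have "\<forall>w\<in>A. z \<le> f w"
    proof
      fix w assume "w \<in> A"
      then have "(INF w\<in>A. ereal (f w)) \<le> ereal (f w)" by (rule INF_lower)
      with z have "ereal z \<le> ereal (f w)" by (meson less_imp_le order.strict_trans2)
      then show "z \<le> f w" by simp
    qed
    with z show "\<exists>c>0. \<forall>w\<in>A. c \<le> f w" by auto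
  next
    assume "\<exists>c>0. \<forall>w\<in>A. c \<le> f w"
    then obtain c where c: "c > 0" "\<forall>w\<in>A. c \<le> f w" by auto
    have "ereal c \<le> (INF w\<in>A. ereal (f w))"
      by (rule INF_greatest) (simp add: c)
    with c show "(INF w\<in>A. ereal (f w)) > 0"
      by (meson ereal_less(2) less_le_trans zero_ereal_def)
  qed
  then show ?thesis unfolding D_set_def by auto
qed

lemma pos_gam: "pos_gambles \<subseteq> gambles" unfolding pos_gambles_def by auto

lemma D_empty: "D_set {} = gambles"
  unfolding D_char using pos_gam by (auto intro: exI[of _ 1])

lemma D_Phi: "D_set A \<in> Phi"
proof (cases "A = {}")
  case True then show ?thesis by (simp add: D_empty Phi_def)
next
  case False
  then obtain a where a: "a \<in> A" by auto
  have "coherent (D_set A)"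
    unfolding coherent_def
  proof (intro conjI ballI allI impI)
    show "D_set A \<subseteq> gambles" unfolding D_char using pos_gam by blast
    show "pos_gambles \<subseteq> D_set A" unfolding D_char by blast
    show "(\<lambda>_. 0::real) \<notin> D_set A"
    proof
      assume z: "(\<lambda>_. 0::real) \<in> D_set A"
      have np: "(\<lambda>_. 0::real) \<notin> pos_gambles" unfolding pos_gambles_def by simp
      with z obtain c :: real where "c > 0" "\<forall>w\<in>A. c \<le> 0" unfolding D_char by blast
      with a show False by force
    qed
  next
    fix f g assume f: "f \<in> D_set A" and g: "g \<in> D_set A"
    have fg: "f \<in> gambles" "g \<in> gambles" using f g unfolding D_char using pos_gam by auto
    hence G: "(\<lambda>w. f w + g w) \<in> gambles" by (rule gam_add)
    show "(\<lambda>w. f w + g w) \<in> D_set A"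
    proof (cases "f \<in> pos_gambles")
      case fp: True
      show ?thesis
      proof (cases "g \<in> pos_gambles")
        case gp: True
        have "(\<lambda>w. f w + g w) \<noteq> (\<lambda>_. 0)"
        proof
          assume "(\<lambda>w. f w + g w) = (\<lambda>_. 0)"
          hence "\<forall>w. f w + g w = 0" by (simp add: fun_eq_iff)
          moreover have "\<forall>w. 0 \<le> f w" "\<forall>w. 0 \<le> g w" using fp gp unfolding pos_gambles_def by auto
          ultimately have "\<forall>w. f w = 0" by (metis add_nonneg_eq_0_iff)
          then have "f = (\<lambda>_. 0)" by auto
          with fp show False unfolding pos_gambles_def by auto
        qed
        with fp gp G show ?thesis unfolding D_char pos_gambles_def by auto
      next
        case False
        with g obtain c where c: "c > 0" "\<forall>w\<in>A. c \<le> g w" unfolding D_char by auto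
        have "\<forall>w\<in>A. c \<le> f w + g w" proof
          fix w assume "w \<in> A"
          moreover have "0 \<le> f w" using fp unfolding pos_gambles_def by auto
          ultimately show "c \<le> f w + g w" using c by (metis add_increasing)
        qed
        with c G show ?thesis unfolding D_char by auto
      qed
    next
      case False
      with f obtain c where c: "c > 0" "\<forall>w\<in>A. c \<le> f w" unfolding D_char by auto
      show ?thesis
      proof (cases "g \<in> pos_gambles")
        case gp: True
        have "\<forall>w\<in>A. c \<le> f w + g w" proof
          fix w assume "w \<in> A"
          moreover have "0 \<le> g w" using gp unfolding pos_gambles_def by auto
          ultimately show "c \<le> f w + g w" using c by (metis add_increasing2)
        qed
        with c G show ?thesis unfolding D_char by auto
      next
        case False
        with g obtain d where d: "d > 0" "\<forall>w\<in>A. d \<le> g w" unfolding D_char by auto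
        have "\<forall>w\<in>A. c + d \<le> f w + g w" using c d by (simp add: add_mono)
        with c d G show ?thesis unfolding D_char by (auto intro!: exI[of _ "c+d"])
      qed
    qed
  next
    fix f and k :: real assume f: "f \<in> D_set A" and k: "k > 0"
    have "f \<in> gambles" using f pos_gam unfolding D_char by auto
    then have G: "(\<lambda>w. k * f w) \<in> gambles" by (rule gam_scale)
    show "(\<lambda>w. k * f w) \<in> D_set A"
    proof (cases "f \<in> pos_gambles")
      case True
      have "(\<lambda>w. k * f w) \<noteq> (\<lambda>_. 0)"
      proof
        assume "(\<lambda>w. k * f w) = (\<lambda>_. 0)"
        hence "\<forall>w. k * f w = 0" by (simp add: fun_eq_iff)
        with k have "f = (\<lambda>_. 0)" by (auto intro!: ext)
        with True show False unfolding pos_gambles_def by auto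
      qed
      with True G k show ?thesis unfolding D_char pos_gambles_def by auto
    next
      case False
      with f obtain c where c: "c > 0" "\<forall>w\<in>A. c \<le> f w" unfolding D_char by auto
      have "\<forall>w\<in>A. k * c \<le> k * f w" using c k by simp
      with c k G show ?thesis unfolding D_char by (auto intro!: exI[of _ "k*c"])
    qed
  qed
  then show ?thesis unfolding Phi_def by blast
qed

lemma D_mono: "A \<subseteq> B \<Longrightarrow> D_set B \<subseteq> D_set A"
  unfolding D_char by blast

lemma cl_least: "K \<subseteq> D \<Longrightarrow> D \<in> Phi \<Longrightarrow> closure_C K \<subseteq> D"
  unfolding closure_C_def by auto

lemma cl_sup: "K \<subseteq> closure_C K"
  unfolding closure_C_def by auto

lemma Phi_cases: "D \<in> Phi \<Longrightarrow> (D = gambles \<Longrightarrow> R) \<Longrightarrow> (coherent D \<Longrightarrow> R) \<Longrightarrow> R"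
  unfolding Phi_def by blast

lemma cl_pos: "pos_gambles \<subseteq> closure_C K"
  unfolding closure_C_def
proof (rule Inter_greatest)
  fix D assume "D \<in> {D \<in> Phi. K \<subseteq> D}"
  then have "D \<in> Phi" by blast
  then show "pos_gambles \<subseteq> D"
  proof (rule Phi_cases)
    assume "D = gambles" then show ?thesis using pos_gam by simp
  next
    assume "coherent D" then show ?thesis unfolding coherent_def by blast
  qed
qed

lemma cl_add: assumes f: "f \<in> closure_C K" and g: "g \<in> closure_C K"
  shows "(\<lambda>w. f w + g w) \<in> closure_C K"
  unfolding closure_C_def
proof (rule InterI)
  fix D assume D: "D \<in> {D \<in> Phi. K \<subseteq> D}"
  then have fD: "f \<in> D" and gD: "g \<in> D" using f g unfolding closure_C_def by blast+
  from D have "D \<in> Phi" by blast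
  then show "(\<lambda>w. f w + g w) \<in> D"
  proof (rule Phi_cases)
    assume "D = gambles" then show ?thesis using fD gD gam_add by simp
  next
    assume "coherent D" then show ?thesis using fD gD unfolding coherent_def by blast
  qed
qed

theorem theorem4:
  fixes Q :: "'q set" and P :: "'q \<Rightarrow> 'w set set"
  assumes partitions: "\<forall>x\<in>Q. partition_on UNIV (P x)"
    and join_closed: "\<forall>x\<in>Q. \<forall>y\<in>Q. \<exists>z\<in>Q. P z = join_part (P x) (P y)"
    and S: "S \<in> PQ Q P" and T: "T \<in> PQ Q P" and x: "x \<in> Q"
  shows "combine (D_set S) (D_set T) = D_set (S \<inter> T)
     \<and> D_set {} = gambles \<and> D_set UNIV = pos_gambles
     \<and> eps_x P x (D_set S) = D_set (saturation P x S)"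
proof (intro conjI)
  show "D_set {} = gambles" by (rule D_empty)
  show "D_set UNIV = pos_gambles"
  proof
    show "pos_gambles \<subseteq> D_set UNIV" unfolding D_char by auto
    show "D_set UNIV \<subseteq> pos_gambles"
    proof
      fix f assume "f \<in> D_set UNIV"
      then show "f \<in> pos_gambles" unfolding D_char
      proof
        assume "f \<in> {f \<in> gambles. \<exists>c>0. \<forall>w\<in>UNIV. c \<le> f w}"
        then obtain c where "f \<in> gambles" "c > 0" "\<forall>w. c \<le> f w" by auto
        moreover have "f \<noteq> (\<lambda>_. 0)"
        proof
          assume "f = (\<lambda>_. 0)"
          then have "f undefined = 0" by simp
          with \<open>c > 0\<close> \<open>\<forall>w. c \<le> f w\<close> show False by (metis not_le)
        qed
        moreover have "\<forall>w. 0 \<le> f w" using \<open>c > 0\<close> \<open>\<forall>w. c \<le> f w\<close> by (meson less_imp_le order_trans)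
        ultimately show ?thesis unfolding pos_gambles_def by auto
      qed simp
    qed
  qed
  show "combine (D_set S) (D_set T) = D_set (S \<inter> T)"
  proof
    show "combine (D_set S) (D_set T) \<subseteq> D_set (S \<inter> T)"
      unfolding combine_def by (rule cl_least[OF _ D_Phi]) (use D_mono[of "S \<inter> T" S] D_mono[of "S \<inter> T" T] in blast)
    show "D_set (S \<inter> T) \<subseteq> combine (D_set S) (D_set T)"
    proof
      fix f assume f: "f \<in> D_set (S \<inter> T)"
      show "f \<in> combine (D_set S) (D_set T)"
      proof (cases "f \<in> pos_gambles")
        case True then show ?thesis unfolding combine_def using cl_pos by auto
      next
        case False
        with f obtain c where c: "f \<in> gambles" "c > 0" "\<forall>w\<in>S \<inter> T. c \<le> f w"
          unfolding D_char by auto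
        define h where "h = (\<lambda>w. if w \<in> T then c/2 else if w \<in> S then f w - c/2 else 0)"
        define g where "g = (\<lambda>w. f w - h w)"
        have hG: "h \<in> gambles" unfolding h_def
          by (intro gam_if gam_const gam_diff c(1))
        have gG: "g \<in> gambles" unfolding g_def by (intro gam_diff c(1) hG)
        have "h \<in> D_set T" unfolding D_char using hG c(2)
          by (auto simp: h_def intro!: exI[of _ "c/2"])
        moreover have "g \<in> D_set S" unfolding D_char using gG c
          by (auto simp: g_def h_def intro!: exI[of _ "c/2"])
        ultimately have "(\<lambda>w. g w + h w) \<in> combine (D_set S) (D_set T)"
          unfolding combine_def using cl_add cl_sup by blast
        moreover have "(\<lambda>w. g w + h w) = f" by (simp add: g_def)
        ultimately show ?thesis by simp
      qed
    qed
  qed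
  have px: "partition_on UNIV (P x)" using partitions x by auto
  have blk: "\<exists>B\<in>P x. w \<in> B" for w using px unfolding partition_on_def by auto
  have same: "B1 = B2" if "B1 \<in> P x" "B2 \<in> P x" "w \<in> B1" "w \<in> B2" for B1 B2 w
    using px that unfolding partition_on_def disjoint_def by blast
  show "eps_x P x (D_set S) = D_set (saturation P x S)"
  proof
    show "eps_x P x (D_set S) \<subseteq> D_set (saturation P x S)"
      unfolding eps_x_def
    proof (rule cl_least[OF _ D_Phi])
      show "D_set S \<inter> L_x P x \<subseteq> D_set (saturation P x S)"
      proof
        fix f assume f: "f \<in> D_set S \<inter> L_x P x"
        show "f \<in> D_set (saturation P x S)"
        proof (cases "f \<in> pos_gambles")
          case True then show ?thesis unfolding D_char by auto
        next
          case False
          with f obtain c where c: "f \<in> gambles" "c > 0" "\<forall>w\<in>S. c \<le> f w"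
            unfolding D_char by auto
          have "\<forall>w\<in>saturation P x S. c \<le> f w"
          proof
            fix w assume "w \<in> saturation P x S"
            then obtain w' B where "w' \<in> S" "B \<in> P x" "w \<in> B" "w' \<in> B"
              unfolding saturation_def equiv_x_def by auto
            moreover have "\<forall>B\<in>P x. \<forall>w\<in>B. \<forall>w'\<in>B. f w = f w'"
              using f unfolding L_x_def by blast
            ultimately have "f w = f w'" by blast
            with \<open>w' \<in> S\<close> show "c \<le> f w" using c by auto
          qed
          with c show ?thesis unfolding D_char by auto
        qed
      qed
    qed
    show "D_set (saturation P x S) \<subseteq> eps_x P x (D_set S)"
    proof
      fix f assume f: "f \<in> D_set (saturation P x S)"
      show "f \<in> eps_x P x (D_set S)"
      proof (cases "f \<in> pos_gambles")
        case True then show ?thesis unfolding eps_x_def using cl_pos by auto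
      next
        case False
        with f obtain c where c: "f \<in> gambles" "c > 0" "\<forall>w\<in>saturation P x S. c \<le> f w"
          unfolding D_char by auto
        from c(1) obtain Bd where Bd: "\<forall>w. \<bar>f w\<bar> \<le> Bd" unfolding gambles_def by auto
        define g where "g = (\<lambda>w. if w \<in> saturation P x S then c else - Bd)"
        have gG: "g \<in> gambles" unfolding g_def by (intro gam_if gam_const)
        have SS: "S \<subseteq> saturation P x S"
        proof
          fix w assume "w \<in> S"
          moreover obtain B where "B \<in> P x" "w \<in> B" using blk by blast
          ultimately show "w \<in> saturation P x S" unfolding saturation_def equiv_x_def by blast
        qed
        have "g \<in> D_set S" unfolding D_char using gG c SS
          by (auto simp: g_def intro!: exI[of _ c])
        moreover have "g \<in> L_x P x"
          unfolding L_x_def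
        proof (clarsimp simp: gG)
          fix B w w' assume B: "B \<in> P x" "w \<in> B" "w' \<in> B"
          have "w \<in> saturation P x S \<longleftrightarrow> w' \<in> saturation P x S"
          proof -
            have "w \<in> saturation P x S" if "B \<in> P x" "w \<in> B" "w' \<in> B" "w' \<in> saturation P x S" for w w'
            proof -
              from that(4) obtain u B2 where "u \<in> S" "B2 \<in> P x" "w' \<in> B2" "u \<in> B2"
                unfolding saturation_def equiv_x_def by auto
              moreover have "B2 = B" using same calculation that by blast
              ultimately show ?thesis using that unfolding saturation_def equiv_x_def by auto
            qed
            then show ?thesis using B by blast
          qed
          then show "g w = g w'" by (simp add: g_def)
        qed
        ultimately have gI: "g \<in> eps_x P x (D_set S)" unfolding eps_x_def using cl_sup by blast
        have nn: "\<forall>w. 0 \<le> f w - g w" 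
        proof
          fix w
          show "0 \<le> f w - g w"
          proof (cases "w \<in> saturation P x S")
            case True then show ?thesis using c by (simp add: g_def)
          next
            case False
            have "- Bd \<le> f w" using Bd[rule_format, of w] by linarith
            with False show ?thesis by (simp add: g_def)
          qed
        qed
        have fe: "(\<lambda>w. g w + (f w - g w)) = f" by simp
        show ?thesis
        proof (cases "(\<lambda>w. f w - g w) = (\<lambda>_. 0)")
          case True
          have "f w = g w" for w using fun_cong[OF True, of w] by simp
          then have "f = g" by (rule ext)
          with gI show ?thesis by simp
        next
          case False
          then have "(\<lambda>w. f w - g w) \<in> pos_gambles"
            unfolding pos_gambles_def using nn gam_diff[OF c(1) gG] by auto
          then have "(\<lambda>w. f w - g w) \<in> eps_x P x (D_set S)" unfolding eps_x_def by (rule subsetD[OF cl_pos])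
          with gI have "(\<lambda>w. g w + (f w - g w)) \<in> eps_x P x (D_set S)"
            unfolding eps_x_def by (rule cl_add)
          with fe show ?thesis by simp
        qed
      qed
    qed
  qed
qed

end
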